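(* Consider any random-access planner that, when interacting with a simulator of $M_\beta$, halts almost surely for every $\beta\in\mathcal{A}$, and let $\pi_\tau$ be its output policy. Then there exists $\beta\in\mathcal{A}$ such that $$\sum_{i=1}^{d-2}\mathbb{P}_\beta\Big(\mathrm{err}_i(\pi_\tau,\beta)\ge\tfrac12\Big)\ge\frac{d-2}{2}-\frac{d-2}{2}\sqrt{1-\exp\Big(-\frac{5\Delta^2H\,\mathbb{E}_\beta[\tau]}{(d-2)^2}\Big)}.$$
   Context: Fix $d\ge3$, $\gamma\in[7/12,1)$, $H=1/(1-\gamma)$, $\alpha\in(0,0.05\gamma H/(1+\gamma)^2]$, $\Delta=4(1+\gamma)^2\alpha/(\gamma H^2)$. Action set $\mathcal{A}=\{\pm1/\sqrt{d-2}\}^{d-2}$, states $\{s_0,s_1\}$, initial state $s_0$. For $\beta\in\mathcal{A}$, $M_\beta$ has deterministic rewards $r(s_0,\cdot)=1$, $r(s_1,\cdot)=0$, transitions $P_\beta(s_0|s_0,a)=\gamma+\Delta\beta^\top a$, $P_\beta(s_1|s_0,a)=1-\gamma-\Delta\beta^\top a$, $P_\beta(s_1|s_1,a)=1$. Random-access planner: at each step, given the full history of queries and answers, the (possibly randomized) planner either queries any state-action pair, receiving an independent sample of next state and reward from $M_\beta$, or halts outputting a stationary memoryless policy $\pi_\tau$; $\tau$ is the number of queries, $\mathbb{P}_\beta,\mathbb{E}_\beta$ the induced probability and expectation. For a policy $\pi$ and $i\in\{1,\dots,d-2\}$, $\mathrm{err}_i(\pi,\beta)=\sum_{a\in\mathcal{A}}\pi(a|s_0)\mathbb{I}\{\mathrm{sign}(a_i)\neq\mathrm{sign}(\beta_i)\}$.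 If $\mathbb{E}_\beta[\tau]=\infty$ the exponential is interpreted as $0$. *)

theory Defs
  imports "HOL-Probability.Probability"
begin

datatype mstate = S0 | S1

type_synonym action = "nat \<Rightarrow> real"

definition action_set :: "nat \<Rightarrow> action set" where
  "action_set d = {a. (\<forall>i\<in>{1..d-2}. a i = 1 / sqrt (real (d-2)) \<or> a i = - 1 / sqrt (real (d-2)))
                      \<and> (\<forall>i. i \<notin> {1..d-2} \<longrightarrow> a i = 0)}"

definition ip :: "nat \<Rightarrow> action \<Rightarrow> action \<Rightarrow> real" where
  "ip d b a = (\<Sum>i=1..d-2. b i * a i)"

type_synonym policy = "mstate \<Rightarrow> action pmf"

type_synonym query = "mstate \<times> action"
type_synonym answer = "mstate \<times> real"   (* next state, reward *)
type_synonym history = "(query \<times> answer) list"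

datatype decision = Query mstate action | Halt policy

type_synonym planner = "history \<Rightarrow> decision pmf"

datatype config = Running history | Done history policy

definition sim :: "nat \<Rightarrow> real \<Rightarrow> real \<Rightarrow> action \<Rightarrow> mstate \<Rightarrow> action \<Rightarrow> answer pmf" where
  "sim d \<gamma> \<Delta> \<beta> s a = (case s of
      S0 \<Rightarrow> map_pmf (\<lambda>b. (if b then S0 else S1, 1)) (bernoulli_pmf (\<gamma> + \<Delta> * ip d \<beta> a))
    | S1 \<Rightarrow> return_pmf (S1, 0))"

definition step :: "planner \<Rightarrow> nat \<Rightarrow> real \<Rightarrow> real \<Rightarrow> action \<Rightarrow> config \<Rightarrow> config pmf" where
  "step P d \<gamma> \<Delta> \<beta> c = (case c of
      Running h \<Rightarrow> P h \<bind> (\<lambda>dec. case dec of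
          Query s a \<Rightarrow> map_pmf (\<lambda>ans. Running (h @ [((s, a), ans)])) (sim d \<gamma> \<Delta> \<beta> s a)
        | Halt \<pi> \<Rightarrow> return_pmf (Done h \<pi>))
    | Done h \<pi> \<Rightarrow> return_pmf (Done h \<pi>))"

fun run :: "planner \<Rightarrow> nat \<Rightarrow> real \<Rightarrow> real \<Rightarrow> action \<Rightarrow> nat \<Rightarrow> config pmf" where
  "run P d \<gamma> \<Delta> \<beta> 0 = return_pmf (Running [])"
| "run P d \<gamma> \<Delta> \<beta> (Suc n) = run P d \<gamma> \<Delta> \<beta> n \<bind> step P d \<gamma> \<Delta> \<beta>"

fun hist :: "config \<Rightarrow> history" where
  "hist (Running h) = h"
| "hist (Done h \<pi>) = h"

definition wf_planner :: "nat \<Rightarrow> planner \<Rightarrow> bool" where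
  "wf_planner d P \<longleftrightarrow> (\<forall>h. \<forall>dec\<in>set_pmf (P h).
      (\<forall>s a. dec = Query s a \<longrightarrow> a \<in> action_set d) \<and>
      (\<forall>\<pi>. dec = Halt \<pi> \<longrightarrow> (\<forall>s. set_pmf (\<pi> s) \<subseteq> action_set d)))"

definition halts_as :: "planner \<Rightarrow> nat \<Rightarrow> real \<Rightarrow> real \<Rightarrow> action \<Rightarrow> bool" where
  "halts_as P d \<gamma> \<Delta> \<beta> \<longleftrightarrow>
     (\<lambda>n. measure_pmf.prob (run P d \<gamma> \<Delta> \<beta> n) {c. \<exists>h \<pi>. c = Done h \<pi>}) \<longlonglongrightarrow> 1"

text \<open>P_beta(the planner halts with history h and output policy pi satisfying E h pi).\<close>
definition halt_prob :: "planner \<Rightarrow> nat \<Rightarrow> real \<Rightarrow> real \<Rightarrow> action \<Rightarrow> (history \<Rightarrow> policy \<Rightarrow> bool) \<Rightarrow> real" where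
  "halt_prob P d \<gamma> \<Delta> \<beta> E =
     (SUP n. measure_pmf.prob (run P d \<gamma> \<Delta> \<beta> n) {c. \<exists>h \<pi>. c = Done h \<pi> \<and> E h \<pi>})"

text \<open>E_beta[tau]: sup over n of E[min(tau, n)] (the history length after n steps).\<close>
definition expected_queries :: "planner \<Rightarrow> nat \<Rightarrow> real \<Rightarrow> real \<Rightarrow> action \<Rightarrow> ennreal" where
  "expected_queries P d \<gamma> \<Delta> \<beta> =
     (SUP n. \<integral>\<^sup>+ c. ennreal (real (length (hist c))) \<partial>measure_pmf (run P d \<gamma> \<Delta> \<beta> n))"

definition err :: "nat \<Rightarrow> nat \<Rightarrow> policy \<Rightarrow> action \<Rightarrow> real" where
  "err d i \<pi> \<beta> = (\<Sum>a\<in>action_set d. pmf (\<pi> S0) a * (if sgn (a i) \<noteq> sgn (\<beta> i) then 1 else 0))"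

end

theory Submission
  imports Defs
begin


lemma ln_lbA:
  fixes x :: real assumes "1 \<le> x"
  shows "(x - 1) - (x - 1)^2 / 2 \<le> ln x"
proof -
  let ?f = "\<lambda>t::real. ln t - (t - 1) + (t - 1)^2 / 2"
  have "?f 1 \<le> ?f x"
  proof (rule DERIV_nonneg_imp_nondecreasing[OF assms])
    fix t :: real assume t: "1 \<le> t" "t \<le> x"
    have "DERIV ?f t :> (1/t - 1 + (t - 1))"
      using t by (auto intro!: derivative_eq_intros simp: field_simps)
    moreover have "1/t - 1 + (t - 1) = (t-1)^2 / t" using t
      by (simp add: field_simps power2_eq_square)
    moreover have "(t-1)^2 / t \<ge> 0" using t by simp
    ultimately show "\<exists>y. DERIV ?f t :> y \<and> 0 \<le> y" by auto
  qed
  then show ?thesis by simp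
qed

lemma ln_lbB:
  fixes x :: real assumes "0 < x" "x \<le> 1"
  shows "(x - 1) - (x - 1)^2 / (2 * x) \<le> ln x"
proof -
  let ?f = "\<lambda>t::real. ln t - t / 2 + 1 / (2 * t)"
  have "?f x \<ge> ?f 1"
  proof (rule DERIV_nonpos_imp_nonincreasing[OF assms(2)])
    fix t :: real assume t: "x \<le> t" "t \<le> 1"
    then have tp: "t > 0" using assms by simp
    have "DERIV ?f t :> (1/t - 1/2 - 1 / (2 * t^2))"
      using tp by (auto intro!: derivative_eq_intros simp: field_simps power2_eq_square)
    moreover have "1/t - 1/2 - 1 / (2 * t^2) = - ((1 - t)^2 / (2 * t^2))" using tp
      by (simp add: field_simps power2_eq_square)
    moreover have "(1-t)^2 / (2*t^2) \<ge> 0" by simp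
    ultimately show "\<exists>y. DERIV ?f t :> y \<and> y \<le> 0" by auto
  qed
  moreover have "?f x = ln x - ((x - 1) - (x - 1)^2 / (2 * x))" using assms
    by (simp add: field_simps power2_eq_square)
  ultimately show ?thesis by simp
qed

lemma ln_lb2:
  fixes x y :: real assumes "0 < x" "0 < y"
  shows "(x - y) - (x - y)^2 / (2 * min x y) \<le> y * ln (x / y)"
proof (cases "x \<le> y")
  case True
  have "(x/y - 1) - (x/y - 1)^2 / (2 * (x/y)) \<le> ln (x/y)"
    using assms True by (intro ln_lbB) auto
  then have "y * ((x/y - 1) - (x/y - 1)^2 / (2 * (x/y))) \<le> y * ln (x/y)"
    using assms by (intro mult_left_mono) auto
  moreover have "y * ((x/y - 1) - (x/y - 1)^2 / (2 * (x/y))) = (x - y) - (x - y)^2 / (2 * min x y)"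
    using assms True by (simp add: field_simps power2_eq_square min_def)
  ultimately show ?thesis by simp
next
  case False
  have "(x/y - 1) - (x/y - 1)^2 / 2 \<le> ln (x/y)"
    using assms False by (intro ln_lbA) auto
  then have "y * ((x/y - 1) - (x/y - 1)^2 / 2) \<le> y * ln (x/y)"
    using assms by (intro mult_left_mono) auto
  moreover have "y * ((x/y - 1) - (x/y - 1)^2 / 2) \<ge> (x - y) - (x - y)^2 / (2 * min x y)"
  proof -
    have "y * ((x/y - 1) - (x/y - 1)^2 / 2) = (x - y) - (x - y)^2 / (2 * y)"
      using assms by (simp add: field_simps power2_eq_square)
    moreover have "(x - y)^2 / (2 * y) \<le> (x - y)^2 / (2 * min x y)"
      using assms False by (simp add: min_def)
    ultimately show ?thesis by simp
  qed
  ultimately show ?thesis by simp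
qed

lemma lecam_real:
  fixes m \<rho> :: real
  assumes "0 < \<rho>" "0 \<le> m" "m \<le> 1" "\<And>t. t > 0 \<Longrightarrow> \<rho> \<le> (t * m + (2 - m) / t) / 2"
  shows "1 - sqrt (1 - \<rho>^2) \<le> m"
proof -
  have r1: "\<rho> \<le> 1" using assms(4)[of 1] by simp
  show ?thesis
  proof (cases "m = 1")
    case True
    have "\<rho>^2 \<le> 1" using r1 assms(1) by (auto intro!: power_le_one)
    then show ?thesis using True by simp
  next
    case False
    then have m1: "m < 1" using assms by simp
    show ?thesis
    proof (cases "m = 0")
      case True
      have "\<rho> \<le> ((4/\<rho>) * m + (2 - m) / (4/\<rho>)) / 2" using assms(4)[of "4/\<rho>"] assms(1) by (simp add: divide_simps)
      then have "\<rho> \<le> \<rho> / 4" using True assms(1) by (simp add: field_simps)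
      then show ?thesis using assms(1) by linarith
    next
      case False
      then have m0: "0 < m" using assms by simp
      define t where "t = sqrt ((2 - m) / m)"
      have tp: "t > 0" unfolding t_def using m0 m1 by simp
      have tt: "t * t = (2 - m) / m" unfolding t_def using m0 m1 by simp
      have "(t * m + (2 - m) / t) / 2 = sqrt (m * (2 - m))"
      proof -
        have "(t * m)^2 = (t*t)*(m*m)" by (simp add: power2_eq_square algebra_simps)
        also have "\<dots> = m * (2 - m)" unfolding tt using m0 by (simp add: field_simps)
        finally have "t * m = sqrt (m * (2 - m))" using tp m0 by (intro real_sqrt_unique[symmetric]) auto
        moreover have "(2 - m) / t = t * m"
          using tp tt m0 by (simp add: field_simps)
        ultimately show ?thesis by simp
      qed
      then have "\<rho> \<le> sqrt (m * (2 - m))" using assms(4)[OF tp] by simp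
      then have "\<rho>^2 \<le> (sqrt (m * (2 - m)))^2" using assms(1) by (intro power_mono) auto
      also have "\<dots> = m * (2 - m)" using m0 m1 by simp
      finally have "\<rho>^2 \<le> m * (2 - m)" .
      then have "(1 - m)^2 \<le> 1 - \<rho>^2" by (simp add: power2_eq_square algebra_simps)
      then have "sqrt ((1 - m)^2) \<le> sqrt (1 - \<rho>^2)" by (rule real_sqrt_le_mono)
      then show ?thesis using m1 by simp
    qed
  qed
qed



definition flip :: "nat \<Rightarrow> action \<Rightarrow> action" where
  "flip i \<beta> = \<beta>(i := - \<beta> i)"

locale LB =
  fixes d :: nat and \<gamma> \<Delta> H :: real and P :: planner
  assumes d3: "d \<ge> 3" and g1: "7/12 \<le> \<gamma>" and g2: "\<gamma> < 1" and HH: "H = 1/(1-\<gamma>)"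
    and D0: "0 \<le> \<Delta>" and D1: "\<Delta> \<le> (1-\<gamma>)/5" and wf: "wf_planner d P"
begin

abbreviation "AS \<equiv> action_set d"
abbreviation "cc \<equiv> 1 / sqrt (real (d-2))"

lemma n_pos: "real (d-2) \<ge> 1" using d3 by simp

lemma cc_pos: "cc > 0" using n_pos by simp

lemma cc_sq: "cc * cc = 1 / real (d-2)" using n_pos by (simp add: field_simps)

lemma AS_iff: "a \<in> AS \<longleftrightarrow> (\<forall>j\<in>{1..d-2}. a j = cc \<or> a j = - cc) \<and> (\<forall>j. j \<notin> {1..d-2} \<longrightarrow> a j = 0)"
  unfolding action_set_def by auto

lemma AS_finite: "finite AS"
proof (rule finite_subset)
  show "AS \<subseteq> {f. \<forall>x. (x \<in> {1..d-2} \<longrightarrow> f x \<in> {cc, -cc}) \<and> (x \<notin> {1..d-2} \<longrightarrow> f x = 0)}"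
  proof
    fix f assume f: "f \<in> AS"
    show "f \<in> {f. \<forall>x. (x \<in> {1..d-2} \<longrightarrow> f x \<in> {cc, -cc}) \<and> (x \<notin> {1..d-2} \<longrightarrow> f x = 0)}"
    proof (intro CollectI allI conjI impI)
      fix x assume x: "x \<in> {1..d-2}" then show "f x \<in> {cc, -cc}" using f unfolding AS_iff by blast
    next
      fix x assume x: "x \<notin> {1..d-2}" then show "f x = 0" using f unfolding AS_iff by blast
    qed
  qed
  show "finite {f. \<forall>x. (x \<in> {1..d-2} \<longrightarrow> f x \<in> {cc, -cc}) \<and> (x \<notin> {1..d-2} \<longrightarrow> f x = (0::real))}"
    by (rule finite_set_of_finite_funs) auto
qed

lemma AS_ne: "(\<lambda>j. if j \<in> {1..d-2} then cc else 0) \<in> AS"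
  unfolding AS_iff by auto

lemma AS_prod: "\<beta> \<in> AS \<Longrightarrow> a \<in> AS \<Longrightarrow> j \<in> {1..d-2} \<Longrightarrow> \<beta> j * a j = 1 / real (d-2) \<or> \<beta> j * a j = - 1 / real (d-2)"
proof -
  assume a: "\<beta> \<in> AS" "a \<in> AS" "j \<in> {1..d-2}"
  have "\<beta> j = cc \<or> \<beta> j = - cc" "a j = cc \<or> a j = - cc" using a by (auto simp: AS_iff)
  then show ?thesis using cc_sq by auto
qed

lemma AS_prod_sq: "\<beta> \<in> AS \<Longrightarrow> a \<in> AS \<Longrightarrow> j \<in> {1..d-2} \<Longrightarrow> (\<beta> j * a j)^2 = 1 / (real (d-2))^2"
  using AS_prod[of \<beta> a j] by (auto simp: power2_eq_square)

lemma AS_prod_abs: "\<beta> \<in> AS \<Longrightarrow> a \<in> AS \<Longrightarrow> j \<in> {1..d-2} \<Longrightarrow> \<bar>\<beta> j * a j\<bar> = 1 / real (d-2)"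
  using AS_prod[of \<beta> a j] by auto

lemma ip_abs: assumes "\<beta> \<in> AS" "a \<in> AS" shows "\<bar>ip d \<beta> a\<bar> \<le> 1"
proof -
  have "\<bar>ip d \<beta> a\<bar> \<le> (\<Sum>j=1..d-2. \<bar>\<beta> j * a j\<bar>)" unfolding ip_def by (rule sum_abs)
  also have "\<dots> = (\<Sum>j=1..d-2. 1 / real (d-2))" using assms by (intro sum.cong) (auto simp: AS_prod_abs)
  also have "\<dots> = 1" using n_pos by simp
  finally show ?thesis .
qed

lemma flip_AS: "\<beta> \<in> AS \<Longrightarrow> i \<in> {1..d-2} \<Longrightarrow> flip i \<beta> \<in> AS"
  unfolding AS_iff flip_def by auto

lemma flip_flip: "flip i (flip i \<beta>) = \<beta>"
  unfolding flip_def by auto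

lemma ip_flip: assumes "i \<in> {1..d-2}"
  shows "ip d (flip i \<beta>) a = ip d \<beta> a - 2 * (\<beta> i * a i)"
proof -
  have "ip d (flip i \<beta>) a - ip d \<beta> a = (\<Sum>j=1..d-2. (if j = i then - 2 * (\<beta> i * a i) else 0))"
    unfolding ip_def flip_def sum_subtractf[symmetric] by (intro sum.cong) auto
  also have "\<dots> = - 2 * (\<beta> i * a i)" using assms by simp
  finally show ?thesis by simp
qed

lemma sgn_AS: "\<beta> \<in> AS \<Longrightarrow> j \<in> {1..d-2} \<Longrightarrow> sgn (\<beta> j) = 1 \<or> sgn (\<beta> j) = -1"
proof -
  assume a: "\<beta> \<in> AS" "j \<in> {1..d-2}"
  have "\<beta> j = cc \<or> \<beta> j = - cc" using a by (auto simp: AS_iff)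
  then show ?thesis using cc_pos by auto
qed

lemma err_compl:
  assumes \<beta>: "\<beta> \<in> AS" and i: "i \<in> {1..d-2}" and \<pi>: "set_pmf (\<pi> S0) \<subseteq> AS"
  shows "err d i \<pi> \<beta> + err d i \<pi> (flip i \<beta>) = 1"
proof -
  have "err d i \<pi> \<beta> + err d i \<pi> (flip i \<beta>) = (\<Sum>a\<in>AS. pmf (\<pi> S0) a)"
    unfolding err_def sum.distrib[symmetric]
  proof (intro sum.cong refl)
    fix a assume a: "a \<in> AS"
    have "sgn (flip i \<beta> i) = - sgn (\<beta> i)" unfolding flip_def by (simp add: sgn_minus)
    then show "pmf (\<pi> S0) a * (if sgn (a i) \<noteq> sgn (\<beta> i) then 1 else 0) +
          pmf (\<pi> S0) a * (if sgn (a i) \<noteq> sgn (flip i \<beta> i) then 1 else 0) = pmf (\<pi> S0) a"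
      using sgn_AS[OF \<beta> i] sgn_AS[OF a i] by auto
  qed
  also have "\<dots> = 1" using \<pi> AS_finite by (rule sum_pmf_eq_1[rotated])
  finally show ?thesis .
qed

definition pr :: "action \<Rightarrow> action \<Rightarrow> real" where
  "pr \<beta> a = \<gamma> + \<Delta> * ip d \<beta> a"

lemma pr_bounds: assumes "\<beta> \<in> AS" "a \<in> AS"
  shows "1/2 \<le> pr \<beta> a" "pr \<beta> a \<le> 1" "4*(1-\<gamma>)/5 \<le> 1 - pr \<beta> a" "1 - pr \<beta> a \<le> 6*(1-\<gamma>)/5"
proof -
  have "\<bar>\<Delta> * ip d \<beta> a\<bar> \<le> \<Delta>"
    using ip_abs[OF assms] D0 by (simp add: abs_mult mult_left_le)
  then have b: "\<gamma> - \<Delta> \<le> pr \<beta> a" "pr \<beta> a \<le> \<gamma> + \<Delta>" unfolding pr_def by auto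
  show "1/2 \<le> pr \<beta> a" "pr \<beta> a \<le> 1" "4*(1-\<gamma>)/5 \<le> 1 - pr \<beta> a" "1 - pr \<beta> a \<le> 6*(1-\<gamma>)/5"
    using b D1 g1 g2 by auto
qed

lemma ln_ratio_bound:
  fixes u v :: real assumes "0 < v" "v \<le> 2 * u" "u \<le> 2 * v"
  shows "\<bar>ln (u / v)\<bar> \<le> 1"
proof -
  have up: "u > 0" using assms by simp
  have "ln (u / v) \<le> u / v - 1" using up assms by (intro ln_le_minus_one) simp
  also have "\<dots> \<le> 1" using assms by (simp add: field_simps)
  finally have 1: "ln (u/v) \<le> 1" .
  have "ln (v / u) \<le> v / u - 1" using up assms by (intro ln_le_minus_one) simp
  also have "\<dots> \<le> 1" using assms up by (simp add: field_simps)
  finally have "ln (v/u) \<le> 1" .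
  moreover have "ln (v / u) = - ln (u / v)" using up assms by (simp add: ln_div)
  ultimately show ?thesis using 1 by auto
qed

definition rt :: "action \<Rightarrow> action \<Rightarrow> query \<Rightarrow> answer \<Rightarrow> real" where
  "rt \<beta> \<beta>' q ans = (case q of (s, a) \<Rightarrow>
      if s = S0 \<and> a \<in> AS then (if fst ans = S0 then pr \<beta>' a / pr \<beta> a else (1 - pr \<beta>' a) / (1 - pr \<beta> a))
      else 1)"

lemma rt_pos: assumes "\<beta> \<in> AS" "\<beta>' \<in> AS" shows "rt \<beta> \<beta>' q ans > 0"
proof -
  obtain s a where q: "q = (s, a)" by (cases q)
  show ?thesis
  proof (cases "s = S0 \<and> a \<in> AS")
    case True
    then have "a \<in> AS" by simp
    note b = pr_bounds[OF assms(1) this] pr_bounds[OF assms(2) this]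
    have "1 - \<gamma> > 0" using g2 by simp
    then show ?thesis unfolding rt_def q using True b
      by (auto intro!: divide_pos_pos)
  qed (auto simp: rt_def q)
qed

lemma rt_ln: assumes "\<beta> \<in> AS" "\<beta>' \<in> AS" shows "\<bar>ln (rt \<beta> \<beta>' q ans)\<bar> \<le> 1"
proof -
  obtain s a where q: "q = (s, a)" by (cases q)
  show ?thesis
  proof (cases "s = S0 \<and> a \<in> AS")
    case True
    then have "a \<in> AS" by simp
    note b = pr_bounds[OF assms(1) this] pr_bounds[OF assms(2) this]
    have "1 - \<gamma> > 0" using g2 by simp
    then show ?thesis unfolding rt_def q using True b
      by (auto intro!: ln_ratio_bound)
  qed (auto simp: rt_def q)
qed

definition K :: real where "K = 5 * \<Delta>^2 * H / (real (d-2))^2"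

lemma KL_step:
  assumes \<beta>: "\<beta> \<in> AS" and i: "i \<in> {1..d-2}" and a: "a \<in> AS"
  shows "pr \<beta> a * ln (pr (flip i \<beta>) a / pr \<beta> a)
       + (1 - pr \<beta> a) * ln ((1 - pr (flip i \<beta>) a) / (1 - pr \<beta> a)) \<ge> - K"
proof -
  define p where "p = pr \<beta> a"
  define q where "q = pr (flip i \<beta>) a"
  note bp = pr_bounds[OF \<beta> a, folded p_def]
  note bq = pr_bounds[OF flip_AS[OF \<beta> i] a, folded q_def]
  have hg: "1 - \<gamma> > 0" using g2 by simp
  have Hge: "H \<ge> 12/5" unfolding HH using g1 g2 by (simp add: field_simps)
  define D2 where "D2 = (q - p)^2"
  have D2v: "D2 = 4 * \<Delta>^2 / (real (d-2))^2"
  proof -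
    have "q - p = - 2 * \<Delta> * (\<beta> i * a i)" unfolding p_def q_def pr_def ip_flip[OF i]
      by (simp add: algebra_simps)
    then have "D2 = 4 * \<Delta>^2 * (\<beta> i * a i)^2" unfolding D2_def by (simp add: power2_eq_square)
    then show ?thesis using AS_prod_sq[OF \<beta> a i] by simp
  qed
  have D2nn: "D2 \<ge> 0" unfolding D2_def by simp
  have l1: "(q - p) - D2 / (2 * min q p) \<le> p * ln (q / p)"
    unfolding D2_def using bp bq by (intro ln_lb2) auto
  have l2: "((1-q) - (1-p)) - D2 / (2 * min (1-q) (1-p)) \<le> (1-p) * ln ((1-q) / (1-p))"
  proof -
    have "(1-q - (1-p)) - (1-q - (1-p))^2 / (2 * min (1-q) (1-p)) \<le> (1-p) * ln ((1-q) / (1-p))"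
      using bp bq hg by (intro ln_lb2) auto
    moreover have "(1-q - (1-p))^2 = D2" unfolding D2_def by (simp add: power2_eq_square algebra_simps)
    ultimately show ?thesis by simp
  qed
  have m1: "D2 / (2 * min q p) \<le> D2" using bp bq D2nn
    by (simp add: divide_le_eq mult_le_cancel_left1 min_def)
  have m2: "D2 / (2 * min (1-q) (1-p)) \<le> D2 * (5 * H / 8)"
  proof -
    have mm: "min (1-q) (1-p) \<ge> 4*(1-\<gamma>)/5" using bp bq by simp
    have mm2: "2 * (4*(1-\<gamma>)/5) \<le> 2 * min (1-q) (1-p)" by (rule mult_left_mono[OF mm]) simp
    have pos: "0 < 2 * min (1-q) (1-p) * (2 * (4*(1-\<gamma>)/5))"
      using mm hg by (intro mult_pos_pos) auto
    have "D2 / (2 * min (1-q) (1-p)) \<le> D2 / (2 * (4*(1-\<gamma>)/5))"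
      by (rule divide_left_mono[OF mm2 D2nn pos])
    also have "\<dots> = D2 * (5 * H / 8)" unfolding HH using hg by (simp add: field_simps)
    finally show ?thesis .
  qed
  have "p * ln (q/p) + (1-p) * ln ((1-q)/(1-p)) \<ge> - (D2 + D2 * (5 * H / 8))"
    using l1 l2 m1 m2 by simp
  moreover have "D2 + D2 * (5 * H / 8) \<le> K"
  proof -
    have "D2 + D2 * (5 * H / 8) = \<Delta>^2 / (real (d-2))^2 * (4 + 5 * H / 2)"
      unfolding D2v using n_pos by (simp add: field_simps)
    also have "\<dots> \<le> \<Delta>^2 / (real (d-2))^2 * (5 * H)"
      using Hge by (intro mult_left_mono) auto
    also have "\<dots> = K" unfolding K_def by simp
    finally show ?thesis .
  qed
  ultimately show ?thesis unfolding p_def q_def by simp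
qed

end


lemma T1_integral_bind_pmf_bdd:
  fixes f :: "'b \<Rightarrow> real"
  assumes B: "\<And>y. y \<in> set_pmf (bind_pmf M N) \<Longrightarrow> \<bar>f y\<bar> \<le> B"
  shows "measure_pmf.expectation (bind_pmf M N) f =
         measure_pmf.expectation M (\<lambda>x. measure_pmf.expectation (N x) f)"
proof -
  define g where "g y = max (- B) (min B (f y))" for y
  have gb: "\<bar>g y\<bar> \<le> \<bar>B\<bar>" for y unfolding g_def by auto
  have fg: "y \<in> set_pmf (bind_pmf M N) \<Longrightarrow> f y = g y" for y
    using B[of y] unfolding g_def by auto
  have fg': "g y = f y" if "x \<in> set_pmf M" "y \<in> set_pmf (N x)" for x y
  proof -
    have "y \<in> set_pmf (bind_pmf M N)" using that by (auto simp: set_bind_pmf)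
    then show ?thesis using fg by simp
  qed
  have "measure_pmf.expectation (bind_pmf M N) f = measure_pmf.expectation (bind_pmf M N) g"
    by (intro integral_cong_AE) (auto simp: AE_measure_pmf_iff fg)
  also have "\<dots> = measure_pmf.expectation M (\<lambda>x. measure_pmf.expectation (N x) g)"
    unfolding measure_pmf_bind
    by (rule integral_bind[where K="count_space UNIV" and B="\<bar>B\<bar>" and B'=1])
       (auto intro: gb measurable_measure_pmf[of N, simplified] simp: space_subprob_algebra subprob_space_measure_pmf measure_pmf.finite_measure
        measure_pmf.emeasure_space_1)
  also have "\<dots> = measure_pmf.expectation M (\<lambda>x. measure_pmf.expectation (N x) f)"
    by (intro integral_cong_AE) (auto simp: AE_measure_pmf_iff intro!: integral_cong_AE fg')
  finally show ?thesis .
qed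

lemma integrable_pmf_bdd:
  fixes f :: "'a \<Rightarrow> real"
  assumes "\<And>x. x \<in> set_pmf M \<Longrightarrow> \<bar>f x\<bar> \<le> B"
  shows "integrable (measure_pmf M) f"
  by (rule measure_pmf.integrable_const_bound[where B=B]) (auto simp: AE_measure_pmf_iff assms)

lemma abs_integral_pmf_bdd:
  fixes f :: "'a \<Rightarrow> real"
  assumes "\<And>x. x \<in> set_pmf M \<Longrightarrow> \<bar>f x\<bar> \<le> B"
  shows "\<bar>measure_pmf.expectation M f\<bar> \<le> B"
proof -
  have i: "integrable (measure_pmf M) f" by (rule integrable_pmf_bdd[OF assms])
  have fb: "- B \<le> f x \<and> f x \<le> B" if "x \<in> set_pmf M" for x
    using assms[OF that] by (auto simp: abs_le_iff)
  have "measure_pmf.expectation M f \<le> B"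
    using fb by (intro measure_pmf.integral_le_const i) (auto simp: AE_measure_pmf_iff)
  moreover have "- B \<le> measure_pmf.expectation M f"
    using fb by (intro measure_pmf.integral_ge_const i) (auto simp: AE_measure_pmf_iff)
  ultimately show ?thesis by auto
qed

context LB begin

lemma set_step:
  assumes "c \<in> set_pmf (step P d \<gamma> \<Delta> \<beta> c0)"
  shows "length (hist c) \<le> Suc (length (hist c0))"
    and "c = Done h \<pi> \<Longrightarrow> c0 = Done h \<pi> \<or> (c0 = Running h \<and> Halt \<pi> \<in> set_pmf (P h))"
proof -
  have "length (hist c) \<le> Suc (length (hist c0)) \<and>
     (c = Done h \<pi> \<longrightarrow> c0 = Done h \<pi> \<or> (c0 = Running h \<and> Halt \<pi> \<in> set_pmf (P h)))"
  proof (cases c0)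
    case (Running h0)
    then obtain dec where dec: "dec \<in> set_pmf (P h0)"
      and c: "c \<in> set_pmf (case dec of Query s a \<Rightarrow> map_pmf (\<lambda>ans. Running (h0 @ [((s, a), ans)])) (sim d \<gamma> \<Delta> \<beta> s a)
          | Halt \<pi> \<Rightarrow> return_pmf (Done h0 \<pi>))"
      using assms by (auto simp: step_def set_bind_pmf)
    show ?thesis using c dec Running by (cases dec) auto
  next
    case (Done h0 \<pi>0)
    then show ?thesis using assms by (auto simp: step_def)
  qed
  then show "length (hist c) \<le> Suc (length (hist c0))"
    and "c = Done h \<pi> \<Longrightarrow> c0 = Done h \<pi> \<or> (c0 = Running h \<and> Halt \<pi> \<in> set_pmf (P h))" by auto
qed

lemma set_run_Suc: "c \<in> set_pmf (run P d \<gamma> \<Delta> \<beta> (Suc n)) \<longleftrightarrow>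
   (\<exists>c0\<in>set_pmf (run P d \<gamma> \<Delta> \<beta> n). c \<in> set_pmf (step P d \<gamma> \<Delta> \<beta> c0))"
  by (auto simp: set_bind_pmf)

lemma len_run: "c \<in> set_pmf (run P d \<gamma> \<Delta> \<beta> n) \<Longrightarrow> length (hist c) \<le> n"
proof (induction n arbitrary: c)
  case 0 then show ?case by simp
next
  case (Suc n)
  then obtain c0 where c0: "c0 \<in> set_pmf (run P d \<gamma> \<Delta> \<beta> n)" "c \<in> set_pmf (step P d \<gamma> \<Delta> \<beta> c0)"
    by (auto simp: set_run_Suc)
  show ?case using set_step(1)[OF c0(2)] Suc.IH[OF c0(1)] by simp
qed

lemma valid_done: "c \<in> set_pmf (run P d \<gamma> \<Delta> \<beta> n) \<Longrightarrow> c = Done h \<pi> \<Longrightarrow> set_pmf (\<pi> S0) \<subseteq> AS"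
proof (induction n arbitrary: c)
  case 0 then show ?case by simp
next
  case (Suc n)
  then obtain c0 where c0: "c0 \<in> set_pmf (run P d \<gamma> \<Delta> \<beta> n)" "c \<in> set_pmf (step P d \<gamma> \<Delta> \<beta> c0)"
    by (auto simp: set_run_Suc)
  from set_step(2)[OF c0(2) Suc.prems(2)]
  show ?case
  proof
    assume "c0 = Done h \<pi>" then show ?thesis using Suc.IH[OF c0(1)] by simp
  next
    assume "c0 = Running h \<and> Halt \<pi> \<in> set_pmf (P h)"
    then show ?thesis using wf unfolding wf_planner_def by blast
  qed
qed

definition LL :: "action \<Rightarrow> action \<Rightarrow> history \<Rightarrow> real" where
  "LL \<beta> \<beta>' h = sum_list (map (\<lambda>(q, ans). ln (rt \<beta> \<beta>' q ans)) h)"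

lemma LL_snoc: "LL \<beta> \<beta>' (h @ [(q, ans)]) = LL \<beta> \<beta>' h + ln (rt \<beta> \<beta>' q ans)"
  unfolding LL_def by simp

lemma LL_Nil: "LL \<beta> \<beta>' [] = 0" unfolding LL_def by simp

lemma LL_bound: assumes "\<beta> \<in> AS" "\<beta>' \<in> AS" shows "\<bar>LL \<beta> \<beta>' h\<bar> \<le> length h"
proof (induction h rule: rev_induct)
  case Nil then show ?case by (simp add: LL_Nil)
next
  case (snoc x h)
  obtain q ans where x: "x = (q, ans)" by (cases x)
  show ?case using snoc rt_ln[OF assms, of q ans] unfolding x LL_snoc by simp
qed

lemma step_Done_integral: fixes f :: "config \<Rightarrow> real" shows "measure_pmf.expectation (step P d \<gamma> \<Delta> \<beta> (Done h \<pi>)) f = f (Done h \<pi>)"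
  by (simp add: step_def expectation_return_pmf)

lemma step_Running_integral:
  fixes f :: "config \<Rightarrow> real"
  assumes B: "\<And>c. length (hist c) \<le> Suc (length h) \<Longrightarrow> \<bar>f c\<bar> \<le> B"
  shows "measure_pmf.expectation (step P d \<gamma> \<Delta> \<beta> (Running h)) f =
    measure_pmf.expectation (P h) (\<lambda>dec. case dec of
        Query s a \<Rightarrow> measure_pmf.expectation (sim d \<gamma> \<Delta> \<beta> s a) (\<lambda>ans. f (Running (h @ [((s, a), ans)])))
      | Halt \<pi> \<Rightarrow> f (Done h \<pi>))"
proof -
  have "measure_pmf.expectation (step P d \<gamma> \<Delta> \<beta> (Running h)) f =
     measure_pmf.expectation (P h) (\<lambda>dec. measure_pmf.expectation (case dec of
          Query s a \<Rightarrow> map_pmf (\<lambda>ans. Running (h @ [((s, a), ans)])) (sim d \<gamma> \<Delta> \<beta> s a)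
        | Halt \<pi> \<Rightarrow> return_pmf (Done h \<pi>)) f)"
    unfolding step_def config.case
  proof (rule T1_integral_bind_pmf_bdd)
    fix y assume y: "y \<in> set_pmf (P h \<bind> (\<lambda>dec. case dec of
          Query s a \<Rightarrow> map_pmf (\<lambda>ans. Running (h @ [((s, a), ans)])) (sim d \<gamma> \<Delta> \<beta> s a)
        | Halt \<pi> \<Rightarrow> return_pmf (Done h \<pi>)))"
    have "y \<in> set_pmf (step P d \<gamma> \<Delta> \<beta> (Running h))" using y by (simp add: step_def)
    from set_step(1)[OF this] show "\<bar>f y\<bar> \<le> B" by (intro B) simp
  qed
  also have "\<dots> = measure_pmf.expectation (P h) (\<lambda>dec. case dec of
        Query s a \<Rightarrow> measure_pmf.expectation (sim d \<gamma> \<Delta> \<beta> s a) (\<lambda>ans. f (Running (h @ [((s, a), ans)])))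
      | Halt \<pi> \<Rightarrow> f (Done h \<pi>))"
    apply (rule Bochner_Integration.integral_cong)
     apply (rule refl)
    subgoal for dec by (cases dec) (auto simp: integral_map_pmf)
    done
  finally show ?thesis .
qed

lemma run_Suc_integral:
  fixes f :: "config \<Rightarrow> real"
  assumes B: "\<And>c. length (hist c) \<le> Suc n \<Longrightarrow> \<bar>f c\<bar> \<le> B"
  shows "measure_pmf.expectation (run P d \<gamma> \<Delta> \<beta> (Suc n)) f =
    measure_pmf.expectation (run P d \<gamma> \<Delta> \<beta> n) (\<lambda>c. measure_pmf.expectation (step P d \<gamma> \<Delta> \<beta> c) f)"
  unfolding run.simps
proof (rule T1_integral_bind_pmf_bdd)
  fix y assume "y \<in> set_pmf (run P d \<gamma> \<Delta> \<beta> n \<bind> step P d \<gamma> \<Delta> \<beta>)"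
  then have "y \<in> set_pmf (run P d \<gamma> \<Delta> \<beta> (Suc n))" by simp
  from len_run[OF this] show "\<bar>f y\<bar> \<le> B" by (rule B)
qed

lemma sim_S0_integral: assumes "\<beta> \<in> AS" "a \<in> AS"
  shows "measure_pmf.expectation (sim d \<gamma> \<Delta> \<beta> S0 a) f = pr \<beta> a * f (S0, 1) + (1 - pr \<beta> a) * f (S1, 1)"
proof -
  note b = pr_bounds[OF assms]
  have "measure_pmf.expectation (sim d \<gamma> \<Delta> \<beta> S0 a) f =
      measure_pmf.expectation (bernoulli_pmf (pr \<beta> a)) (\<lambda>b. f (if b then S0 else S1, 1))"
    by (simp add: sim_def pr_def integral_map_pmf)
  also have "\<dots> = pr \<beta> a * f (S0, 1) + (1 - pr \<beta> a) * f (S1, 1)"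
    using b by (subst integral_bernoulli_pmf) auto
  finally show ?thesis .
qed

lemma sim_S1_integral: fixes f :: "answer \<Rightarrow> real" shows "measure_pmf.expectation (sim d \<gamma> \<Delta> \<beta> S1 a) f = f (S1, 0)"
  by (simp add: sim_def expectation_return_pmf)

end


context LB begin

definition XH :: "action \<Rightarrow> action \<Rightarrow> history \<Rightarrow> real" where
  "XH \<beta> \<beta>' h = exp (LL \<beta> \<beta>' h)"

lemma XH_bound: assumes "\<beta> \<in> AS" "\<beta>' \<in> AS" "length h \<le> m" shows "0 < XH \<beta> \<beta>' h" "XH \<beta> \<beta>' h \<le> exp m"
proof -
  show "0 < XH \<beta> \<beta>' h" unfolding XH_def by simp
  have "LL \<beta> \<beta>' h \<le> m" using LL_bound[OF assms(1,2), of h] assms(3) by linarith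
  then show "XH \<beta> \<beta>' h \<le> exp m" unfolding XH_def by simp
qed

lemma XH_snoc: assumes "\<beta> \<in> AS" "\<beta>' \<in> AS"
  shows "XH \<beta> \<beta>' (h @ [(q, ans)]) = XH \<beta> \<beta>' h * rt \<beta> \<beta>' q ans"
  unfolding XH_def LL_snoc exp_add using rt_pos[OF assms] by simp

lemma wf_query: "Query s a \<in> set_pmf (P h) \<Longrightarrow> a \<in> AS"
  using wf unfolding wf_planner_def by blast

lemma K_nonneg: "K \<ge> 0"
proof -
  have "H > 0" unfolding HH using g2 by simp
  then show ?thesis unfolding K_def by simp
qed

lemma step_lik:
  fixes g :: "config \<Rightarrow> real"
  assumes \<beta>: "\<beta> \<in> AS" and i: "i \<in> {1..d-2}" and len: "length (hist c0) \<le> n"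
    and gB: "\<And>c. \<bar>g c\<bar> \<le> B"
  shows "measure_pmf.expectation (step P d \<gamma> \<Delta> \<beta> c0) (\<lambda>c. XH \<beta> (flip i \<beta>) (hist c) * g c)
       = XH \<beta> (flip i \<beta>) (hist c0) * measure_pmf.expectation (step P d \<gamma> \<Delta> (flip i \<beta>) c0) g"
proof (cases c0)
  case (Done h \<pi>)
  then show ?thesis by (simp add: step_Done_integral)
next
  case (Running h)
  define \<beta>' where "\<beta>' = flip i \<beta>"
  have \<beta>': "\<beta>' \<in> AS" unfolding \<beta>'_def using flip_AS[OF \<beta> i] .
  have B0: "0 \<le> B" using gB[of c0] by simp
  let ?X = "XH \<beta> \<beta>'"
  have b1: "\<bar>?X (hist c) * g c\<bar> \<le> exp (Suc n) * B" if "length (hist c) \<le> Suc (length h)" for c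
  proof -
    have "length (hist c) \<le> Suc n" using that len Running by simp
    note xb = XH_bound[OF \<beta> \<beta>' this]
    have "\<bar>?X (hist c) * g c\<bar> = ?X (hist c) * \<bar>g c\<bar>" using xb by (simp add: abs_mult)
    also have "\<dots> \<le> exp (Suc n) * B" using xb gB[of c] B0 by (intro mult_mono) auto
    finally show ?thesis .
  qed
  have L: "measure_pmf.expectation (step P d \<gamma> \<Delta> \<beta> c0) (\<lambda>c. ?X (hist c) * g c) =
    measure_pmf.expectation (P h) (\<lambda>dec. case dec of
        Query s a \<Rightarrow> measure_pmf.expectation (sim d \<gamma> \<Delta> \<beta> s a) (\<lambda>ans. ?X (h @ [((s, a), ans)]) * g (Running (h @ [((s, a), ans)])))
      | Halt \<pi> \<Rightarrow> ?X h * g (Done h \<pi>))"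
    unfolding Running by (subst step_Running_integral[OF b1]) simp_all
  have R: "measure_pmf.expectation (step P d \<gamma> \<Delta> \<beta>' c0) g =
    measure_pmf.expectation (P h) (\<lambda>dec. case dec of
        Query s a \<Rightarrow> measure_pmf.expectation (sim d \<gamma> \<Delta> \<beta>' s a) (\<lambda>ans. g (Running (h @ [((s, a), ans)])))
      | Halt \<pi> \<Rightarrow> g (Done h \<pi>))"
    unfolding Running by (rule step_Running_integral[OF gB])
  have "measure_pmf.expectation (P h) (\<lambda>dec. case dec of
        Query s a \<Rightarrow> measure_pmf.expectation (sim d \<gamma> \<Delta> \<beta> s a) (\<lambda>ans. ?X (h @ [((s, a), ans)]) * g (Running (h @ [((s, a), ans)])))
      | Halt \<pi> \<Rightarrow> ?X h * g (Done h \<pi>)) =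
    measure_pmf.expectation (P h) (\<lambda>dec. ?X h * (case dec of
        Query s a \<Rightarrow> measure_pmf.expectation (sim d \<gamma> \<Delta> \<beta>' s a) (\<lambda>ans. g (Running (h @ [((s, a), ans)])))
      | Halt \<pi> \<Rightarrow> g (Done h \<pi>)))"
  proof (intro integral_cong_AE, simp, simp, unfold AE_measure_pmf_iff, intro ballI)
    fix dec assume dec: "dec \<in> set_pmf (P h)"
    show "(case dec of
        Query s a \<Rightarrow> measure_pmf.expectation (sim d \<gamma> \<Delta> \<beta> s a) (\<lambda>ans. ?X (h @ [((s, a), ans)]) * g (Running (h @ [((s, a), ans)])))
      | Halt \<pi> \<Rightarrow> ?X h * g (Done h \<pi>)) = ?X h * (case dec of
        Query s a \<Rightarrow> measure_pmf.expectation (sim d \<gamma> \<Delta> \<beta>' s a) (\<lambda>ans. g (Running (h @ [((s, a), ans)])))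
      | Halt \<pi> \<Rightarrow> g (Done h \<pi>))"
    proof (cases dec)
      case (Query s a)
      have a: "a \<in> AS" using wf_query dec Query by simp
      show ?thesis
      proof (cases s)
        case S0
        note bp = pr_bounds[OF \<beta> a]
        have p0: "pr \<beta> a > 0" "1 - pr \<beta> a > 0" using bp g2 by auto
        show ?thesis unfolding Query S0 decision.case
          using p0 a
          by (simp add: sim_S0_integral[OF \<beta> a] sim_S0_integral[OF \<beta>' a] XH_snoc[OF \<beta> \<beta>'] rt_def
              field_simps)
      next
        case S1
        show ?thesis unfolding Query S1 decision.case
          by (simp add: sim_S1_integral XH_snoc[OF \<beta> \<beta>'] rt_def)
      qed
    qed simp
  qed
  then show ?thesis using L R unfolding Running \<beta>'_def[symmetric] by simp
qed

lemma lik: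
  fixes g :: "config \<Rightarrow> real"
  assumes \<beta>: "\<beta> \<in> AS" and i: "i \<in> {1..d-2}" and gB: "\<And>c. \<bar>g c\<bar> \<le> B"
  shows "measure_pmf.expectation (run P d \<gamma> \<Delta> \<beta> n) (\<lambda>c. XH \<beta> (flip i \<beta>) (hist c) * g c)
       = measure_pmf.expectation (run P d \<gamma> \<Delta> (flip i \<beta>) n) g"
  using gB
proof (induction n arbitrary: g B)
  case 0
  then show ?case by (simp add: XH_def LL_Nil)
next
  case (Suc n)
  define \<beta>' where "\<beta>' = flip i \<beta>"
  have \<beta>': "\<beta>' \<in> AS" unfolding \<beta>'_def using flip_AS[OF \<beta> i] .
  have B0: "0 \<le> B" using Suc.prems[of undefined] by simp
  define G where "G c0 = measure_pmf.expectation (step P d \<gamma> \<Delta> \<beta>' c0) g" for c0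
  have GB: "\<bar>G c\<bar> \<le> B" for c unfolding G_def by (rule abs_integral_pmf_bdd) (rule Suc.prems)
  have b1: "\<bar>XH \<beta> \<beta>' (hist c) * g c\<bar> \<le> exp (Suc n) * B" if "length (hist c) \<le> Suc n" for c
  proof -
    note xb = XH_bound[OF \<beta> \<beta>' that]
    have "\<bar>XH \<beta> \<beta>' (hist c) * g c\<bar> = XH \<beta> \<beta>' (hist c) * \<bar>g c\<bar>" using xb by (simp add: abs_mult)
    also have "\<dots> \<le> exp (Suc n) * B" using xb Suc.prems[of c] B0 by (intro mult_mono) auto
    finally show ?thesis .
  qed
  have "measure_pmf.expectation (run P d \<gamma> \<Delta> \<beta> (Suc n)) (\<lambda>c. XH \<beta> \<beta>' (hist c) * g c)
      = measure_pmf.expectation (run P d \<gamma> \<Delta> \<beta> n) (\<lambda>c0. measure_pmf.expectation (step P d \<gamma> \<Delta> \<beta> c0) (\<lambda>c. XH \<beta> \<beta>' (hist c) * g c))"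
    by (rule run_Suc_integral[OF b1])
  also have "\<dots> = measure_pmf.expectation (run P d \<gamma> \<Delta> \<beta> n) (\<lambda>c0. XH \<beta> \<beta>' (hist c0) * G c0)"
    unfolding G_def \<beta>'_def
    by (intro integral_cong_AE) (auto simp: AE_measure_pmf_iff intro!: step_lik[OF \<beta> i len_run Suc.prems])
  also have "\<dots> = measure_pmf.expectation (run P d \<gamma> \<Delta> \<beta>' n) G"
    unfolding \<beta>'_def by (rule Suc.IH[OF GB])
  also have "\<dots> = measure_pmf.expectation (run P d \<gamma> \<Delta> \<beta>' (Suc n)) g"
    unfolding G_def by (rule run_Suc_integral[symmetric, OF Suc.prems])
  finally show ?case unfolding \<beta>'_def .
qed

end


context LB begin

definition FF :: "action \<Rightarrow> action \<Rightarrow> config \<Rightarrow> real" where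
  "FF \<beta> \<beta>' c = LL \<beta> \<beta>' (hist c) + K * real (length (hist c))"

lemma FF_bound: assumes "\<beta> \<in> AS" "\<beta>' \<in> AS" "length (hist c) \<le> m"
  shows "\<bar>FF \<beta> \<beta>' c\<bar> \<le> (1 + K) * m"
proof -
  have "\<bar>FF \<beta> \<beta>' c\<bar> \<le> \<bar>LL \<beta> \<beta>' (hist c)\<bar> + K * real (length (hist c))"
    unfolding FF_def using K_nonneg abs_triangle_ineq[of "LL \<beta> \<beta>' (hist c)" "K * real (length (hist c))"]
    by simp
  also have "\<dots> \<le> m + K * m"
    using LL_bound[OF assms(1,2), of "hist c"] assms(3) K_nonneg by (intro add_mono mult_left_mono) auto
  finally show ?thesis by (simp add: algebra_simps)
qed

lemma step_drift:
  assumes \<beta>: "\<beta> \<in> AS" and i: "i \<in> {1..d-2}" and len: "length (hist c0) \<le> n"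
  shows "FF \<beta> (flip i \<beta>) c0 \<le> measure_pmf.expectation (step P d \<gamma> \<Delta> \<beta> c0) (FF \<beta> (flip i \<beta>))"
proof (cases c0)
  case (Done h \<pi>)
  then show ?thesis by (simp add: step_Done_integral)
next
  case (Running h)
  define \<beta>' where "\<beta>' = flip i \<beta>"
  have \<beta>': "\<beta>' \<in> AS" unfolding \<beta>'_def using flip_AS[OF \<beta> i] .
  let ?F = "FF \<beta> \<beta>'"
  have b1: "\<bar>?F c\<bar> \<le> (1 + K) * Suc n" if "length (hist c) \<le> Suc (length h)" for c
    using FF_bound[OF \<beta> \<beta>', of c "Suc n"] that len Running by simp
  define inner where "inner dec = (case dec of
        Query s a \<Rightarrow> measure_pmf.expectation (sim d \<gamma> \<Delta> \<beta> s a) (\<lambda>ans. ?F (Running (h @ [((s, a), ans)])))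
      | Halt \<pi> \<Rightarrow> ?F (Done h \<pi>))" for dec
  have L: "measure_pmf.expectation (step P d \<gamma> \<Delta> \<beta> c0) ?F = measure_pmf.expectation (P h) inner"
    unfolding Running inner_def by (rule step_Running_integral[OF b1])
  have ib: "\<bar>inner dec\<bar> \<le> (1 + K) * Suc n" for dec
  proof (cases dec)
    case (Query s a)
    show ?thesis unfolding inner_def Query decision.case
      by (rule abs_integral_pmf_bdd, rule b1) simp
  next
    case (Halt \<pi>)
    show ?thesis unfolding inner_def Halt decision.case by (rule b1) simp
  qed
  have "?F c0 \<le> measure_pmf.expectation (P h) inner"
  proof (rule measure_pmf.integral_ge_const)
    show "integrable (measure_pmf (P h)) inner" by (rule integrable_pmf_bdd[OF ib])
    show "AE dec in measure_pmf (P h). ?F c0 \<le> inner dec"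
      unfolding AE_measure_pmf_iff
    proof
      fix dec assume dec: "dec \<in> set_pmf (P h)"
      show "?F c0 \<le> inner dec"
      proof (cases dec)
        case (Query s a)
        have a: "a \<in> AS" using wf_query dec Query by simp
        show ?thesis
        proof (cases s)
          case S0
          note bp = pr_bounds[OF \<beta> a]
          have p0: "pr \<beta> a > 0" "1 - pr \<beta> a > 0" using bp g2 by auto
          have kl: "pr \<beta> a * ln (pr \<beta>' a / pr \<beta> a)
             + (1 - pr \<beta> a) * ln ((1 - pr \<beta>' a) / (1 - pr \<beta> a)) \<ge> - K"
            unfolding \<beta>'_def by (rule KL_step[OF \<beta> i a])
          have "inner dec = pr \<beta> a * (LL \<beta> \<beta>' h + ln (pr \<beta>' a / pr \<beta> a) + K * (length h + 1))
              + (1 - pr \<beta> a) * (LL \<beta> \<beta>' h + ln ((1 - pr \<beta>' a) / (1 - pr \<beta> a)) + K * (length h + 1))"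
            unfolding inner_def Query S0 decision.case sim_S0_integral[OF \<beta> a]
            using a by (simp add: FF_def LL_snoc rt_def)
          also have "\<dots> = LL \<beta> \<beta>' h + K * length h + K + (pr \<beta> a * ln (pr \<beta>' a / pr \<beta> a)
             + (1 - pr \<beta> a) * ln ((1 - pr \<beta>' a) / (1 - pr \<beta> a)))"
            by (simp add: algebra_simps)
          finally show ?thesis using kl unfolding Running by (simp add: FF_def)
        next
          case S1
          have "inner dec = LL \<beta> \<beta>' h + K * (length h + 1)"
            unfolding inner_def Query S1 decision.case sim_S1_integral
            by (simp add: FF_def LL_snoc rt_def)
          then show ?thesis using K_nonneg unfolding Running by (simp add: FF_def algebra_simps)
        qed
      next
        case (Halt \<pi>)
        then show ?thesis unfolding inner_def Running by (simp add: FF_def)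
      qed
    qed
  qed
  then show ?thesis using L unfolding \<beta>'_def by simp
qed

lemma drift:
  assumes \<beta>: "\<beta> \<in> AS" and i: "i \<in> {1..d-2}"
  shows "0 \<le> measure_pmf.expectation (run P d \<gamma> \<Delta> \<beta> n) (FF \<beta> (flip i \<beta>))"
proof (induction n)
  case 0
  then show ?case by (simp add: FF_def LL_Nil)
next
  case (Suc n)
  define \<beta>' where "\<beta>' = flip i \<beta>"
  have \<beta>': "\<beta>' \<in> AS" unfolding \<beta>'_def using flip_AS[OF \<beta> i] .
  let ?F = "FF \<beta> \<beta>'"
  have "measure_pmf.expectation (run P d \<gamma> \<Delta> \<beta> n) ?F \<le>
     measure_pmf.expectation (run P d \<gamma> \<Delta> \<beta> n) (\<lambda>c0. measure_pmf.expectation (step P d \<gamma> \<Delta> \<beta> c0) ?F)"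
  proof (rule integral_mono_AE)
    show "integrable (measure_pmf (run P d \<gamma> \<Delta> \<beta> n)) ?F"
      by (rule integrable_pmf_bdd[where B="(1+K) * n"]) (rule FF_bound[OF \<beta> \<beta>' len_run])
    show "integrable (measure_pmf (run P d \<gamma> \<Delta> \<beta> n)) (\<lambda>c0. measure_pmf.expectation (step P d \<gamma> \<Delta> \<beta> c0) ?F)"
    proof (rule integrable_pmf_bdd[where B="(1+K) * Suc n"], rule abs_integral_pmf_bdd)
      fix c0 c assume "c0 \<in> set_pmf (run P d \<gamma> \<Delta> \<beta> n)" "c \<in> set_pmf (step P d \<gamma> \<Delta> \<beta> c0)"
      then have "c \<in> set_pmf (run P d \<gamma> \<Delta> \<beta> (Suc n))" by (auto simp: set_run_Suc)
      then show "\<bar>?F c\<bar> \<le> (1 + K) * Suc n" by (rule FF_bound[OF \<beta> \<beta>' len_run])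
    qed
    show "AE c0 in measure_pmf (run P d \<gamma> \<Delta> \<beta> n). ?F c0 \<le> measure_pmf.expectation (step P d \<gamma> \<Delta> \<beta> c0) ?F"
      unfolding AE_measure_pmf_iff \<beta>'_def using step_drift[OF \<beta> i len_run] by blast
  qed
  also have "\<dots> = measure_pmf.expectation (run P d \<gamma> \<Delta> \<beta> (Suc n)) ?F"
    by (rule run_Suc_integral[symmetric, OF FF_bound[OF \<beta> \<beta>']])
  finally show ?case using Suc.IH unfolding \<beta>'_def by simp
qed

end


context LB begin

lemma sqrt_amgm:
  fixes x t :: real assumes "x > 0" "t > 0"
  shows "sqrt x \<le> (t * min 1 x + max 1 x / t) / 2"
proof -
  have "min 1 x * max 1 x = x" by (simp add: min_def max_def)
  then have "sqrt x = sqrt ((t * min 1 x) * (max 1 x / t))" using assms by simp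
  also have "\<dots> \<le> (t * min 1 x + max 1 x / t) / 2"
    using assms by (intro arith_geo_mean_sqrt) auto
  finally show ?thesis .
qed

lemma per_n:
  assumes \<beta>: "\<beta> \<in> AS" and i: "i \<in> {1..d-2}"
    and T: "measure_pmf.expectation (run P d \<gamma> \<Delta> \<beta> n) (\<lambda>c. real (length (hist c))) \<le> T"
  shows "1 - sqrt (1 - exp (- K * T)) \<le>
      measure_pmf.prob (run P d \<gamma> \<Delta> \<beta> n) {c. \<exists>h \<pi>. c = Done h \<pi> \<and> 1/2 \<le> err d i \<pi> \<beta>}
    + measure_pmf.prob (run P d \<gamma> \<Delta> (flip i \<beta>) n) {c. \<exists>h \<pi>. c = Done h \<pi> \<and> 1/2 \<le> err d i \<pi> (flip i \<beta>)}
    + measure_pmf.prob (run P d \<gamma> \<Delta> \<beta> n) {c. \<exists>h. c = Running h}"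
proof -
  define \<beta>' where "\<beta>' = flip i \<beta>"
  have \<beta>': "\<beta>' \<in> AS" unfolding \<beta>'_def using flip_AS[OF \<beta> i] .
  define \<mu> where "\<mu> = run P d \<gamma> \<Delta> \<beta> n"
  define \<nu> where "\<nu> = run P d \<gamma> \<Delta> \<beta>' n"
  define A where "A = {c. \<exists>h \<pi>. c = Done h \<pi> \<and> 1/2 \<le> err d i \<pi> \<beta>}"
  define B where "B = {c. \<exists>h \<pi>. c = Done h \<pi> \<and> 1/2 \<le> err d i \<pi> \<beta>'}"
  define R where "R = {c::config. \<exists>h. c = Running h}"
  define X where "X c = XH \<beta> \<beta>' (hist c)" for c
  define L where "L c = LL \<beta> \<beta>' (hist c)" for c
  define len where "len c = real (length (hist c))" for c
  have lenb: "c \<in> set_pmf \<mu> \<Longrightarrow> len c \<le> n" for c unfolding len_def \<mu>_def using len_run by simp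
  have Xb: "c \<in> set_pmf \<mu> \<Longrightarrow> 0 < X c \<and> X c \<le> exp n" for c
    unfolding X_def \<mu>_def using XH_bound[OF \<beta> \<beta>' len_run] by blast
  have Lb: "c \<in> set_pmf \<mu> \<Longrightarrow> \<bar>L c\<bar> \<le> n" for c
    unfolding L_def \<mu>_def using LL_bound[OF \<beta> \<beta>', of "hist c"] len_run[of c] by force
  have XL: "X c = exp (L c)" for c unfolding X_def L_def XH_def ..
  have K0: "K \<ge> 0" by (rule K_nonneg)
  have intX: "integrable \<mu> X" by (rule integrable_pmf_bdd[where B="exp n"]) (use Xb in force)
  have intL: "integrable \<mu> L" by (rule integrable_pmf_bdd[OF Lb])
  have intlen: "integrable \<mu> len" by (rule integrable_pmf_bdd[where B=n]) (use lenb in \<open>auto simp: len_def\<close>)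
  have intmin: "integrable \<mu> (\<lambda>c. min 1 (X c))" by (rule integrable_pmf_bdd[where B=1]) (use Xb in force)
  have intmax: "integrable \<mu> (\<lambda>c. max 1 (X c))" by (rule integrable_pmf_bdd[where B="1 + exp n"]) (use Xb in force)
  have intsq: "integrable \<mu> (\<lambda>c. exp (L c / 2))" by (rule integrable_pmf_bdd[where B="exp n"]) (use Lb in force)
  have intL2: "integrable \<mu> (\<lambda>c. L c / 2)" using intL by simp
  have intA: "integrable \<mu> (indicator A :: config \<Rightarrow> real)" by (rule integrable_pmf_bdd[where B=1]) auto
  have intR: "integrable \<mu> (indicator R :: config \<Rightarrow> real)" by (rule integrable_pmf_bdd[where B=1]) auto
  have intXB: "integrable \<mu> (\<lambda>c. X c * indicator B c)" by (rule integrable_pmf_bdd[where B="exp n"])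
     (auto split: split_indicator dest!: Xb)
  have EX: "measure_pmf.expectation \<mu> X = 1"
    using lik[OF \<beta> i, of "\<lambda>_. 1" 1 n] unfolding \<mu>_def X_def \<beta>'_def by simp
  define m where "m = measure_pmf.expectation \<mu> (\<lambda>c. min 1 (X c))"
  have m0: "0 \<le> m" unfolding m_def
    by (rule measure_pmf.integral_ge_const[OF intmin]) (auto simp: AE_measure_pmf_iff dest: Xb)
  have m1: "m \<le> 1" unfolding m_def
    by (rule measure_pmf.integral_le_const[OF intmin]) (auto simp: AE_measure_pmf_iff)
  have Emax: "measure_pmf.expectation \<mu> (\<lambda>c. max 1 (X c)) = 2 - m"
  proof -
    have "measure_pmf.expectation \<mu> (\<lambda>c. max 1 (X c)) = measure_pmf.expectation \<mu> (\<lambda>c. (1 + X c) - min 1 (X c))"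
      by (intro Bochner_Integration.integral_cong) (auto simp: max_def min_def)
    also have "\<dots> = (1 + 1) - m" unfolding m_def using intX intmin EX
      by (simp add: Bochner_Integration.integral_diff Bochner_Integration.integral_add)
    finally show ?thesis by simp
  qed
  have EL: "measure_pmf.expectation \<mu> L \<ge> - K * T"
  proof -
    have "0 \<le> measure_pmf.expectation \<mu> (\<lambda>c. L c + K * len c)"
      using drift[OF \<beta> i, of n] unfolding \<mu>_def FF_def L_def len_def \<beta>'_def .
    also have "\<dots> = measure_pmf.expectation \<mu> L + K * measure_pmf.expectation \<mu> len"
      using intL intlen by simp
    finally have "- (K * measure_pmf.expectation \<mu> len) \<le> measure_pmf.expectation \<mu> L" by simp
    moreover have "K * measure_pmf.expectation \<mu> len \<le> K * T"
      using T K0 unfolding \<mu>_def len_def by (intro mult_left_mono) auto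
    ultimately show ?thesis by simp
  qed
  define \<rho> where "\<rho> = measure_pmf.expectation \<mu> (\<lambda>c. exp (L c / 2))"
  have jen: "exp (measure_pmf.expectation \<mu> (\<lambda>c. L c / 2)) \<le> \<rho>"
    unfolding \<rho>_def
    by (rule measure_pmf.jensens_inequality[where I=UNIV and q=exp, OF intL2 _ _ intsq exp_convex]) auto
  have rho_lb: "exp (- K * T / 2) \<le> \<rho>"
  proof -
    have "measure_pmf.expectation \<mu> (\<lambda>c. L c / 2) = measure_pmf.expectation \<mu> L / 2" by simp
    then have "- K * T / 2 \<le> measure_pmf.expectation \<mu> (\<lambda>c. L c / 2)" using EL by simp
    then show ?thesis using jen by (meson exp_le_cancel_iff order.trans)
  qed
  have rho_pos: "0 < \<rho>" using rho_lb by (meson exp_gt_zero order_less_le_trans)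
  have rho_up: "\<rho> \<le> (t * m + (2 - m) / t) / 2" if t: "t > 0" for t
  proof -
    have "\<rho> \<le> measure_pmf.expectation \<mu> (\<lambda>c. (t * min 1 (X c) + max 1 (X c) / t) / 2)"
      unfolding \<rho>_def
    proof (rule integral_mono_AE[OF intsq])
      show "integrable \<mu> (\<lambda>c. (t * min 1 (X c) + max 1 (X c) / t) / 2)"
        using intmin intmax by simp
      show "AE c in \<mu>. exp (L c / 2) \<le> (t * min 1 (X c) + max 1 (X c) / t) / 2"
        unfolding AE_measure_pmf_iff
      proof
        fix c assume c: "c \<in> set_pmf \<mu>"
        have "exp (L c / 2) = sqrt (X c)" unfolding XL
          by (rule real_sqrt_unique[symmetric]) (auto simp: power2_eq_square exp_add[symmetric])
        also have "\<dots> \<le> (t * min 1 (X c) + max 1 (X c) / t) / 2"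
          using Xb[OF c] t by (intro sqrt_amgm) auto
        finally show "exp (L c / 2) \<le> (t * min 1 (X c) + max 1 (X c) / t) / 2" .
      qed
    qed
    also have "\<dots> = (t * m + measure_pmf.expectation \<mu> (\<lambda>c. max 1 (X c)) / t) / 2"
      unfolding m_def using intmin intmax by simp
    also have "\<dots> = (t * m + (2 - m) / t) / 2" using Emax by simp
    finally show ?thesis .
  qed
  have lc: "1 - sqrt (1 - \<rho>^2) \<le> m"
    by (rule lecam_real[OF rho_pos m0 m1 rho_up])
  have "exp (- K * T) \<le> \<rho>^2"
  proof -
    have "exp (- K * T) = (exp (- K * T / 2))^2" by (simp add: power2_eq_square exp_add[symmetric])
    also have "\<dots> \<le> \<rho>^2" using rho_lb by (intro power_mono) auto
    finally show ?thesis .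
  qed
  then have "sqrt (1 - \<rho>^2) \<le> sqrt (1 - exp (- K * T))" by (intro real_sqrt_le_mono) simp
  then have main1: "1 - sqrt (1 - exp (- K * T)) \<le> m" using lc by linarith
  have PB: "measure_pmf.prob \<nu> B = measure_pmf.expectation \<mu> (\<lambda>c. X c * indicator B c)"
    using lik[OF \<beta> i, of "indicator B" 1 n] unfolding \<mu>_def \<nu>_def X_def \<beta>'_def
    by (simp split: split_indicator)
  have "m \<le> measure_pmf.expectation \<mu> (\<lambda>c. indicator A c + X c * indicator B c + indicator R c)"
    unfolding m_def
  proof (rule integral_mono_AE[OF intmin])
    show "integrable \<mu> (\<lambda>c. indicator A c + X c * indicator B c + indicator R c)"
      using intA intXB intR by simp
    show "AE c in \<mu>. min 1 (X c) \<le> indicator A c + X c * indicator B c + indicator R c"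
      unfolding AE_measure_pmf_iff
    proof
      fix c assume c: "c \<in> set_pmf \<mu>"
      have X0: "0 < X c" using Xb[OF c] by simp
      show "min 1 (X c) \<le> indicator A c + X c * indicator B c + indicator R c"
      proof (cases c)
        case (Running h)
        then have "c \<in> R" unfolding R_def by simp
        then show ?thesis using X0 by (auto split: split_indicator)
      next
        case (Done h \<pi>)
        have "set_pmf (\<pi> S0) \<subseteq> AS" using valid_done c Done unfolding \<mu>_def by blast
        from err_compl[of \<beta> i \<pi>, OF \<beta> i this] have "err d i \<pi> \<beta> + err d i \<pi> \<beta>' = 1" unfolding \<beta>'_def .
        then have "c \<in> A \<or> c \<in> B" unfolding A_def B_def Done by auto
        then show ?thesis using X0 by (auto split: split_indicator)
      qed
    qed
  qed
  also have "\<dots> = measure_pmf.prob \<mu> A + measure_pmf.prob \<nu> B + measure_pmf.prob \<mu> R"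
    unfolding PB using intA intXB intR by simp
  finally show ?thesis using main1 unfolding \<mu>_def \<nu>_def A_def B_def R_def \<beta>'_def by simp
qed

end


context LB begin

definition Xb :: "action \<Rightarrow> real" where
  "Xb \<beta> = (if expected_queries P d \<gamma> \<Delta> \<beta> = \<top> then 0
           else exp (- (5 * \<Delta>^2 * H * enn2real (expected_queries P d \<gamma> \<Delta> \<beta>)) / (real (d-2))^2))"

definition HP :: "action \<Rightarrow> nat \<Rightarrow> real" where
  "HP \<beta> i = halt_prob P d \<gamma> \<Delta> \<beta> (\<lambda>h \<pi>. err d i \<pi> \<beta> \<ge> 1/2)"

lemma HP_ge: "measure_pmf.prob (run P d \<gamma> \<Delta> \<beta> n) {c. \<exists>h \<pi>. c = Done h \<pi> \<and> 1/2 \<le> err d i \<pi> \<beta>} \<le> HP \<beta> i"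
proof -
  let ?f = "\<lambda>n. measure_pmf.prob (run P d \<gamma> \<Delta> \<beta> n) {c. \<exists>h \<pi>. c = Done h \<pi> \<and> 1/2 \<le> err d i \<pi> \<beta>}"
  have "?f n \<le> (SUP n. ?f n)" by (rule cSUP_upper) (auto intro!: bdd_aboveI[where M=1])
  then show ?thesis unfolding HP_def halt_prob_def by simp
qed

lemma HP_nonneg: "0 \<le> HP \<beta> i"
  using HP_ge[of \<beta> 0 i] measure_nonneg order_trans by blast

lemma El_bound:
  assumes "expected_queries P d \<gamma> \<Delta> \<beta> \<noteq> \<top>"
  shows "measure_pmf.expectation (run P d \<gamma> \<Delta> \<beta> n) (\<lambda>c. real (length (hist c)))
      \<le> enn2real (expected_queries P d \<gamma> \<Delta> \<beta>)"
proof -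
  let ?E = "measure_pmf.expectation (run P d \<gamma> \<Delta> \<beta> n) (\<lambda>c. real (length (hist c)))"
  have int: "integrable (run P d \<gamma> \<Delta> \<beta> n) (\<lambda>c. real (length (hist c)))"
    by (rule integrable_pmf_bdd[where B=n]) (auto dest: len_run)
  have E0: "0 \<le> ?E" by (rule measure_pmf.integral_ge_const[OF int]) auto
  have "ennreal ?E = (\<integral>\<^sup>+ c. ennreal (real (length (hist c))) \<partial>measure_pmf (run P d \<gamma> \<Delta> \<beta> n))"
    by (rule nn_integral_eq_integral[symmetric, OF int]) auto
  also have "\<dots> \<le> expected_queries P d \<gamma> \<Delta> \<beta>"
    unfolding expected_queries_def by (rule SUP_upper) simp
  finally have "enn2real (ennreal ?E) \<le> enn2real (expected_queries P d \<gamma> \<Delta> \<beta>)"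
    using assms by (intro enn2real_mono) (auto simp: top.not_eq_extremum)
  then show ?thesis using E0 by simp
qed

lemma pair:
  assumes \<beta>: "\<beta> \<in> AS" and i: "i \<in> {1..d-2}" and ha: "halts_as P d \<gamma> \<Delta> \<beta>"
  shows "1 - sqrt (1 - Xb \<beta>) \<le> HP \<beta> i + HP (flip i \<beta>) i"
proof (cases "expected_queries P d \<gamma> \<Delta> \<beta> = \<top>")
  case True
  then show ?thesis unfolding Xb_def using HP_nonneg[of \<beta> i] HP_nonneg[of "flip i \<beta>" i] by simp
next
  case False
  define T where "T = enn2real (expected_queries P d \<gamma> \<Delta> \<beta>)"
  have XbT: "Xb \<beta> = exp (- K * T)"
    unfolding Xb_def T_def K_def using False by simp
  define D where "D = {c::config. \<exists>h \<pi>. c = Done h \<pi>}"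
  define R where "R = {c::config. \<exists>h. c = Running h}"
  define r where "r n = measure_pmf.prob (run P d \<gamma> \<Delta> \<beta> n) R" for n
  have RD: "R = UNIV - D" unfolding R_def D_def
    apply (rule set_eqI)
    subgoal for c by (cases c) auto
    done
  have r_eq: "r n = 1 - measure_pmf.prob (run P d \<gamma> \<Delta> \<beta> n) D" for n
    unfolding r_def RD using measure_pmf.prob_compl[of D "run P d \<gamma> \<Delta> \<beta> n"] by simp
  have "(\<lambda>n. measure_pmf.prob (run P d \<gamma> \<Delta> \<beta> n) D) \<longlonglongrightarrow> 1"
    using ha unfolding halts_as_def D_def .
  then have "r \<longlonglongrightarrow> 1 - 1" unfolding r_eq by (intro tendsto_diff) auto
  then have lim: "(\<lambda>n. (1 - sqrt (1 - exp (- K * T))) - r n) \<longlonglongrightarrow> (1 - sqrt (1 - exp (- K * T))) - 0"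
    by (intro tendsto_diff) auto
  have "\<forall>n. (1 - sqrt (1 - exp (- K * T))) - r n \<le> HP \<beta> i + HP (flip i \<beta>) i"
  proof
    fix n
    have "1 - sqrt (1 - exp (- K * T)) \<le>
      measure_pmf.prob (run P d \<gamma> \<Delta> \<beta> n) {c. \<exists>h \<pi>. c = Done h \<pi> \<and> 1/2 \<le> err d i \<pi> \<beta>}
    + measure_pmf.prob (run P d \<gamma> \<Delta> (flip i \<beta>) n) {c. \<exists>h \<pi>. c = Done h \<pi> \<and> 1/2 \<le> err d i \<pi> (flip i \<beta>)}
    + r n"
      unfolding r_def R_def by (rule per_n[OF \<beta> i El_bound[OF False, folded T_def]])
    then show "(1 - sqrt (1 - exp (- K * T))) - r n \<le> HP \<beta> i + HP (flip i \<beta>) i"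
      using HP_ge[of \<beta> n i] HP_ge[of "flip i \<beta>" n i] by simp
  qed
  then have "1 - sqrt (1 - exp (- K * T)) - 0 \<le> HP \<beta> i + HP (flip i \<beta>) i"
    by (intro LIMSEQ_le_const2[OF lim]) auto
  then show ?thesis unfolding XbT by simp
qed

lemma flip_image: "i \<in> {1..d-2} \<Longrightarrow> flip i ` AS = AS"
proof
  assume i: "i \<in> {1..d-2}"
  show "flip i ` AS \<subseteq> AS" using flip_AS[OF _ i] by auto
  show "AS \<subseteq> flip i ` AS"
  proof
    fix \<beta> assume "\<beta> \<in> AS"
    then show "\<beta> \<in> flip i ` AS" using flip_AS[OF _ i] flip_flip[of i \<beta>] by (metis image_eqI)
  qed
qed

lemma flip_inj: "inj_on (flip i) A"
  by (metis flip_flip inj_on_inverseI)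

lemma final:
  assumes ha: "\<forall>\<beta>\<in>AS. halts_as P d \<gamma> \<Delta> \<beta>"
  shows "\<exists>\<beta>\<in>AS. (\<Sum>i=1..d-2. HP \<beta> i) \<ge> real (d-2) / 2 - real (d-2) / 2 * sqrt (1 - Xb \<beta>)"
proof (rule ccontr)
  assume "\<not> ?thesis"
  then have lt: "\<And>\<beta>. \<beta> \<in> AS \<Longrightarrow> (\<Sum>i=1..d-2. HP \<beta> i) < real (d-2) / 2 - real (d-2) / 2 * sqrt (1 - Xb \<beta>)"
    by auto
  define g where "g \<beta> = (1 - sqrt (1 - Xb \<beta>)) / 2" for \<beta>
  have per_i: "(\<Sum>\<beta>\<in>AS. g \<beta>) \<le> (\<Sum>\<beta>\<in>AS. HP \<beta> i)" if i: "i \<in> {1..d-2}" for i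
  proof -
    have "(\<Sum>\<beta>\<in>AS. HP (flip i \<beta>) i) = (\<Sum>\<beta>\<in>flip i ` AS. HP \<beta> i)"
      by (rule sum.reindex[symmetric, OF flip_inj, unfolded comp_def])
    also have "\<dots> = (\<Sum>\<beta>\<in>AS. HP \<beta> i)" unfolding flip_image[OF i] ..
    finally have sw: "(\<Sum>\<beta>\<in>AS. HP (flip i \<beta>) i) = (\<Sum>\<beta>\<in>AS. HP \<beta> i)" .
    have pr2: "2 * g \<beta> \<le> HP \<beta> i + HP (flip i \<beta>) i" if "\<beta> \<in> AS" for \<beta>
      using pair[OF that i] ha that unfolding g_def by auto
    have "(\<Sum>\<beta>\<in>AS. 2 * g \<beta>) \<le> (\<Sum>\<beta>\<in>AS. HP \<beta> i + HP (flip i \<beta>) i)"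
      by (rule sum_mono) (rule pr2)
    also have "\<dots> = 2 * (\<Sum>\<beta>\<in>AS. HP \<beta> i)" unfolding sum.distrib sw by simp
    finally show ?thesis by (simp add: sum_distrib_left[symmetric])
  qed
  have "(\<Sum>\<beta>\<in>AS. real (d-2) * g \<beta>) = (\<Sum>i=1..d-2. \<Sum>\<beta>\<in>AS. g \<beta>)"
    by (simp add: sum_distrib_left[symmetric])
  also have "\<dots> \<le> (\<Sum>i=1..d-2. \<Sum>\<beta>\<in>AS. HP \<beta> i)" by (intro sum_mono per_i)
  also have "\<dots> = (\<Sum>\<beta>\<in>AS. \<Sum>i=1..d-2. HP \<beta> i)" by (rule sum.swap)
  also have "\<dots> < (\<Sum>\<beta>\<in>AS. real (d-2) * g \<beta>)"
  proof (rule sum_strict_mono[OF AS_finite])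
    show "AS \<noteq> {}" using AS_ne by blast
    fix \<beta> assume "\<beta> \<in> AS"
    from lt[OF this] show "(\<Sum>i=1..d-2. HP \<beta> i) < real (d-2) * g \<beta>"
      unfolding g_def by (simp add: algebra_simps)
  qed
  finally show False by simp
qed

end

theorem lemmaH3:
  fixes d :: nat and \<gamma> H \<alpha> \<Delta> :: real and P :: planner
  assumes "d \<ge> 3"
    and "7/12 \<le> \<gamma>" and "\<gamma> < 1"
    and "H = 1 / (1 - \<gamma>)"
    and "0 < \<alpha>" and "\<alpha> \<le> 0.05 * \<gamma> * H / (1 + \<gamma>)^2"
    and "\<Delta> = 4 * (1 + \<gamma>)^2 * \<alpha> / (\<gamma> * H^2)"
    and "wf_planner d P"
    and "\<forall>\<beta>\<in>action_set d. halts_as P d \<gamma> \<Delta> \<beta>"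
  shows "\<exists>\<beta>\<in>action_set d.
     (\<Sum>i=1..d-2. halt_prob P d \<gamma> \<Delta> \<beta> (\<lambda>h \<pi>. err d i \<pi> \<beta> \<ge> 1/2))
       \<ge> real (d-2) / 2 - real (d-2) / 2 *
          sqrt (1 - (if expected_queries P d \<gamma> \<Delta> \<beta> = \<top> then 0
                     else exp (- (5 * \<Delta>^2 * H * enn2real (expected_queries P d \<gamma> \<Delta> \<beta>))
                               / (real (d-2))^2)))"
proof -
  have g0: "\<gamma> > 0" using assms(2) by simp
  have hg: "1 - \<gamma> > 0" using assms(3) by simp
  have H0: "H > 0" using assms(4) hg by simp
  have D0: "0 \<le> \<Delta>" using assms(5,7) g0 H0 by simp
  have D1: "\<Delta> \<le> (1 - \<gamma>) / 5"
  proof -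
    have q0: "(1 + \<gamma>)^2 > 0" using g0 by simp
    have "4 * (1 + \<gamma>)^2 * \<alpha> \<le> 4 * (1 + \<gamma>)^2 * (0.05 * \<gamma> * H / (1 + \<gamma>)^2)"
      using assms(6) q0 by (intro mult_left_mono) auto
    also have "\<dots> = 0.2 * \<gamma> * H" using q0 by (simp add: field_simps)
    finally have "\<Delta> \<le> 0.2 * \<gamma> * H / (\<gamma> * H^2)"
      unfolding assms(7) using g0 H0 by (intro divide_right_mono) auto
    also have "\<dots> = 0.2 / H" using g0 H0 by (simp add: field_simps power2_eq_square)
    also have "\<dots> = (1 - \<gamma>) / 5" unfolding assms(4) using hg by (simp add: field_simps)
    finally show ?thesis .
  qed
  interpret LB d \<gamma> \<Delta> H P
    using assms(1-4,8) D0 D1 by unfold_locales auto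
  show ?thesis using final[OF assms(9)] unfolding HP_def Xb_def by simp
qed


end
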